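(* If $G$ is a graph with no isolated vertices and total domination number $\gamma_t(G) = 3$, then $\gamma_{\rm gr}^t(G) > 3$.
   Context: All graphs are finite, simple, without isolated vertices. $\gamma_t(G)$ is the minimum size of a set $D$ of vertices such that every vertex of $G$ has a neighbor in $D$. $N(v)$ denotes the open neighborhood of $v$. A sequence $S=(v_1,\ldots,v_k)$ of distinct vertices of $G$ is a legal (open neighborhood) sequence if $N(v_i)\setminus \bigcup_{j=1}^{i-1} N(v_j)\neq\emptyset$ for every $i\in\{2,\ldots,k\}$. It is a total dominating sequence if moreover the set $\{v_1,\ldots,v_k\}$ is a total dominating set of $G$. The Grundy total domination number $\gamma_{\rm gr}^t(G)$ is the maximum length of a total dominating sequence of $G$. *)

theory Defs
  imports Main
begin

definition graph :: "'a set \<Rightarrow> ('a \<Rightarrow> 'a \<Rightarrow> bool) \<Rightarrow> bool" where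
  "graph V E \<longleftrightarrow> finite V \<and> (\<forall>u v. E u v \<longrightarrow> E v u) \<and> (\<forall>v. \<not> E v v)
     \<and> (\<forall>u v. E u v \<longrightarrow> u \<in> V \<and> v \<in> V)"

definition no_isolated :: "'a set \<Rightarrow> ('a \<Rightarrow> 'a \<Rightarrow> bool) \<Rightarrow> bool" where
  "no_isolated V E \<longleftrightarrow> (\<forall>v\<in>V. \<exists>u. E v u)"

definition nbhd :: "('a \<Rightarrow> 'a \<Rightarrow> bool) \<Rightarrow> 'a \<Rightarrow> 'a set" where
  "nbhd E v = {u. E v u}"

definition total_dominating_set :: "'a set \<Rightarrow> ('a \<Rightarrow> 'a \<Rightarrow> bool) \<Rightarrow> 'a set \<Rightarrow> bool" where
  "total_dominating_set V E D \<longleftrightarrow> D \<subseteq> V \<and> (\<forall>v\<in>V. \<exists>d\<in>D. E v d)"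

definition total_domination_number :: "'a set \<Rightarrow> ('a \<Rightarrow> 'a \<Rightarrow> bool) \<Rightarrow> nat" where
  "total_domination_number V E = (LEAST k. \<exists>D. total_dominating_set V E D \<and> card D = k)"

definition legal_sequence :: "'a set \<Rightarrow> ('a \<Rightarrow> 'a \<Rightarrow> bool) \<Rightarrow> 'a list \<Rightarrow> bool" where
  "legal_sequence V E S \<longleftrightarrow> set S \<subseteq> V \<and> distinct S \<and>
     (\<forall>i. 0 < i \<and> i < length S \<longrightarrow>
        nbhd E (S ! i) - (\<Union>j<i. nbhd E (S ! j)) \<noteq> {})"

definition total_dominating_sequence :: "'a set \<Rightarrow> ('a \<Rightarrow> 'a \<Rightarrow> bool) \<Rightarrow> 'a list \<Rightarrow> bool" where
  "total_dominating_sequence V E S \<longleftrightarrow>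
     legal_sequence V E S \<and> total_dominating_set V E (set S)"

definition grundy_total_domination_number :: "'a set \<Rightarrow> ('a \<Rightarrow> 'a \<Rightarrow> bool) \<Rightarrow> nat" where
  "grundy_total_domination_number V E =
     (GREATEST k. \<exists>S. total_dominating_sequence V E S \<and> length S = k)"

end

theory Submission
  imports Defs
begin

lemma legal_snoc:
  assumes "legal_sequence V E S" "y \<in> V" "y \<notin> set S" "w \<in> nbhd E y"
    and "\<forall>j<length S. w \<notin> nbhd E (S!j)"
  shows "legal_sequence V E (S@[y])"
  unfolding legal_sequence_def
proof (intro conjI allI impI)
  show "set (S @ [y]) \<subseteq> V" using assms(1,2) by (auto simp: legal_sequence_def)
  show "distinct (S @ [y])" using assms(1,3) by (auto simp: legal_sequence_def)
  fix i assume i: "0 < i \<and> i < length (S @ [y])"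
  show "nbhd E ((S @ [y]) ! i) - (\<Union>j<i. nbhd E ((S @ [y]) ! j)) \<noteq> {}"
  proof (cases "i < length S")
    case True
    have "(\<Union>j<i. nbhd E ((S @ [y]) ! j)) = (\<Union>j<i. nbhd E (S ! j))"
      using True by (auto simp: nth_append)
    then show ?thesis using True i assms(1) by (auto simp: legal_sequence_def nth_append)
  next
    case False
    then have ii: "i = length S" using i by auto
    have "(\<Union>j<i. nbhd E ((S @ [y]) ! j)) = (\<Union>j<i. nbhd E (S ! j))"
      using ii by (auto simp: nth_append)
    then show ?thesis using ii assms(4,5) by auto
  qed
qed

lemma extend:
  assumes g: "graph V E" and ni: "no_isolated V E"
  shows "legal_sequence V E S \<Longrightarrow> \<exists>T. total_dominating_sequence V E T \<and> length S \<le> length T"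
proof (induction "card V - length S" arbitrary: S rule: less_induct)
  case less
  show ?case
  proof (cases "total_dominating_set V E (set S)")
    case True
    then show ?thesis using less.prems by (auto simp: total_dominating_sequence_def)
  next
    case False
    have sub: "set S \<subseteq> V" using less.prems by (auto simp: legal_sequence_def)
    then obtain w where w: "w \<in> V" "\<forall>d\<in>set S. \<not> E w d"
      using False by (auto simp: total_dominating_set_def)
    obtain y where y: "E w y" using ni w by (auto simp: no_isolated_def)
    have yV: "y \<in> V" using g y by (auto simp: graph_def)
    have yS: "y \<notin> set S" using w y by auto
    have wy: "w \<in> nbhd E y" using g y by (auto simp: graph_def nbhd_def)
    have nw: "\<forall>j<length S. w \<notin> nbhd E (S!j)"
    proof (intro allI impI)
      fix j assume "j < length S"
      then have "S!j \<in> set S" by auto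
      then show "w \<notin> nbhd E (S!j)" using w g by (auto simp: graph_def nbhd_def)
    qed
    have L: "legal_sequence V E (S@[y])" using legal_snoc[OF less.prems yV yS wy nw] .
    have fin: "finite V" using g by (auto simp: graph_def)
    have "distinct (S@[y])" using L by (auto simp: legal_sequence_def)
    moreover have "set (S@[y]) \<subseteq> V" using L by (auto simp: legal_sequence_def)
    ultimately have "length (S@[y]) \<le> card V"
      by (metis card_mono distinct_card fin)
    then have "card V - length (S@[y]) < card V - length S" by auto
    from less.hyps[OF this L] show ?thesis by auto
  qed
qed

theorem mainTheorem3:
  fixes V :: "'a set" and E :: "'a \<Rightarrow> 'a \<Rightarrow> bool"
  assumes "graph V E"
    and "no_isolated V E"
    and "total_domination_number V E = 3"
  shows "grundy_total_domination_number V E > 3"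
proof -
  note g = assms(1) and ni = assms(2)
  have fin: "finite V" using g by (auto simp: graph_def)
  have sym: "\<And>u v. E u v \<Longrightarrow> E v u" and irr: "\<And>v. \<not> E v v"
    and inV: "\<And>u v. E u v \<Longrightarrow> u \<in> V \<and> v \<in> V" using g by (auto simp: graph_def)
  have VT: "total_dominating_set V E V"
    unfolding total_dominating_set_def no_isolated_def using ni inV by (metis no_isolated_def subsetI)
  let ?P = "\<lambda>k. \<exists>D. total_dominating_set V E D \<and> card D = k"
  have ex: "?P (card V)" using VT by auto
  have "?P (LEAST k. ?P k)" using LeastI[of ?P, OF ex] .
  then obtain D where D: "total_dominating_set V E D" "card D = 3"
    using assms(3) by (auto simp: total_domination_number_def)
  have no2: "\<And>D'. total_dominating_set V E D' \<Longrightarrow> card D' \<noteq> 2"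
  proof
    fix D' assume "total_dominating_set V E D'" "card D' = 2"
    then have "?P 2" by auto
    then have "(LEAST k. ?P k) \<le> 2" by (rule Least_le)
    then show False using assms(3) by (auto simp: total_domination_number_def)
  qed
  obtain a b c where abc: "D = {a,b,c}" "a \<noteq> b" "b \<noteq> c" "a \<noteq> c"
    using D(2) by (auto simp: card_3_iff)
  have DV: "a \<in> V" "b \<in> V" "c \<in> V" using D(1) abc by (auto simp: total_dominating_set_def)
  have dom: "\<And>v. v \<in> V \<Longrightarrow> E v a \<or> E v b \<or> E v c"
    using D(1) abc by (auto simp: total_dominating_set_def)
  have "\<not> total_dominating_set V E {b,c}" using no2[of "{b,c}"] abc by auto
  then obtain q where q: "q \<in> V" "\<not> E q b" "\<not> E q c"
    using DV by (auto simp: total_dominating_set_def)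
  have qa: "E q a" using dom[OF q(1)] q by auto
  have aq: "a \<noteq> q" using qa irr by auto
  have "\<not> total_dominating_set V E {a,q}" using no2[of "{a,q}"] aq by auto
  then obtain r where r: "r \<in> V" "\<not> E r a" "\<not> E r q"
    using DV q by (auto simp: total_dominating_set_def)
  obtain z where z: "E r z" "\<not> E q z"
    using dom[OF r(1)] r q by auto
  obtain y where y: "E r y" using ni r by (auto simp: no_isolated_def)
  have yV: "y \<in> V" using inV y by auto
  have L1: "legal_sequence V E [q]" using q by (auto simp: legal_sequence_def)
  have L2: "legal_sequence V E ([q]@[r])"
    apply (rule legal_snoc[OF L1 r(1), where w = z])
    using z r qa sym irr by (auto simp: nbhd_def)
  have L3: "legal_sequence V E ([q,r]@[a])"
    apply (rule legal_snoc[where w = q])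
    using L2 DV z r qa sym irr by (auto simp: nbhd_def less_Suc_eq numeral_2_eq_2)
  have L4: "legal_sequence V E ([q,r,a]@[y])"
    apply (rule legal_snoc[where w = r])
    using L3 yV z r q qa y sym irr by (auto simp: nbhd_def less_Suc_eq numeral_3_eq_3)
  obtain T where T: "total_dominating_sequence V E T" "4 \<le> length T"
    using extend[OF g ni L4] by auto
  have bound: "\<forall>k. (\<exists>S. total_dominating_sequence V E S \<and> length S = k) \<longrightarrow> k \<le> card V"
  proof (intro allI impI)
    fix k assume "\<exists>S. total_dominating_sequence V E S \<and> length S = k"
    then obtain S where S: "total_dominating_sequence V E S" "length S = k" by auto
    then have "distinct S" "set S \<subseteq> V"
      by (auto simp: total_dominating_sequence_def legal_sequence_def)
    then show "k \<le> card V" using S fin by (metis card_mono distinct_card)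
  qed
  have "length T \<le> grundy_total_domination_number V E"
    unfolding grundy_total_domination_number_def
    by (rule Greatest_le_nat[where b = "card V"]) (use T bound in auto)
  then show ?thesis using T by auto
qed

end
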